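(* Let $\mathcal M,\mathcal N$ be finite polyptych lattices over $F$, let $F\subseteq F'\subseteq\mathbb R$, and let $(\mathcal M,\mathcal N,\mathsf v,\mathsf w)$ be a strict dual $F'$-pair. Then $\mathsf w$ and $\mathsf v$ extend to isomorphisms of $F_{\ge0}$-semialgebras $\mathsf w:S_{\mathcal N_{F'}}\to P_{\mathcal M_{F'}}$ and $\mathsf v:S_{\mathcal M_{F'}}\to P_{\mathcal N_{F'}}$, given by $\mathsf w(\bigoplus_{n\in S}n)=\min_{n\in S}\mathsf w(n)$ (pointwise minimum of functions), $\mathsf w(\infty)=\infty$, and similarly for $\mathsf v$.
   Context: Fix a subring $F$ with $\mathbb Z\subseteq F\subseteq\mathbb R$. A polyptych lattice of rank $r$ over $F$ is a collection $\{M_\alpha\}_{\alpha\in I}$ of free $F$-modules of rank $r$ with piecewise $F$-linear maps (continuous and $F$-linear on each cone of some complete $F$-rational fan) $\mu_{\alpha,\beta}:M_\alpha\to M_\beta$ with $\mu_{\alpha,\alpha}=\mathrm{id}$, $\mu_{\alpha,\beta}=\mu_{\beta,\alpha}^{-1}$, $\mu_{\beta,\gamma}\circ\mu_{\alpha,\beta}=\mu_{\alpha,\gamma}$; finite if $I$ is finite. Elements are classes of $\bigsqcup M_\alpha$ under $m_\alpha\sim\mu_{\alpha,\beta}(m_\alpha)$; $\pi_\alpha$ chart maps; $\mathcal M_{F'}$ has charts $M_\alpha\otimes_FF'$ (extended mutations), e.g. $\mathcal M_{\mathbb R}$. $m+_\alpha m':=\pi_\alpha^{-1}(\pi_\alpha(m)+\pi_\alpha(m'))$,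 $\lambda m:=\pi_\alpha^{-1}(\lambda\pi_\alpha(m))$ ($\lambda\ge 0$). $\Sigma(\mathcal M)$: the coarsest complete fan of cones of $\mathcal M_{\mathbb R}$ (subsets whose chart images are $F$-rational polyhedral cones) on whose chart images all mutations are linear. A point of $\mathcal M_{F'}$ is $p:\mathcal M_{F'}\to F'$ with $p(m)+p(m')=\min_\alpha p(m+_\alpha m')$ and $p(\lambda m)=\lambda p(m)$ ($\lambda\in F'_{\ge0}$); $\mathrm{Sp}_{F'}(\mathcal M)$ is the set of such; $\mathrm{Sp}_{\mathbb R}(\mathcal M,\alpha)$ is the set of $p\in\mathrm{Sp}_{\mathbb R}(\mathcal M)$ linear on chart $\alpha$. Strict dual $F'$-pair: maps $\mathsf v:\mathcal M_{\mathbb R}\to\mathrm{Sp}_{\mathbb R}(\mathcal N)$, $\mathsf w:\mathcal N_{\mathbb R}\to\mathrm{Sp}_{\mathbb R}(\mathcal M)$ with (1) $\mathsf v(\mathcal M_{F'})\subseteq\mathrm{Sp}_{F'}(\mathcal N)$, $\mathsf w(\mathcal N_{F'})\subseteq\mathrm{Sp}_{F'}(\mathcal M)$; (2) $\mathsf v(m)(n)=\mathsf w(n)(m)$ for $m\in\mathcal M_{F'},n\in\mathcal N_{F'}$; (3) these restrictions are bijections; (4) the sets $\mathsf v^{-1}(\mathrm{Sp}_{\mathbb R}(\mathcal N,\gamma))$, $\gamma$ ranging over chart indices of $\mathcal N$, are exactly the maximal-dimensional cones of $\Sigma(\mathcal M)$, and symmetrically for $\mathsf w$. Point-convex hull: $\mathcal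 H_{p,a}=\{m:p(m)\ge a\}$, $\mathrm{p\text{-}conv}_{F'}(S)=\bigcap\{\mathcal H_{p,a}:p\in\mathrm{Sp}_{F'}(\mathcal M),a\in F',S\subseteq\mathcal H_{p,a}\}$. Canonical semialgebra $S_{\mathcal M_{F'}}$: free commutative idempotent semigroup ($\oplus$) on elements of $\mathcal M_{F'}$ modulo $\bigoplus_{S}m=\bigoplus_{S'}m$ when $\mathrm{p\text{-}conv}_{F'}(S)=\mathrm{p\text{-}conv}_{F'}(S')$, plus identity $\infty$, with product $m\star m'=\bigoplus_\alpha(m+_\alpha m')$ extended distributively and $F_{\ge 0}$-action by scaling elements. The point semialgebra $P_{\mathcal M_{F'}}$ is the sub-semialgebra of functions $\mathcal M_{\mathbb R}\to\mathbb R\cup\{\infty\}$ (operations pointwise $\min$ and pointwise $+$, scaling by $F_{\ge0}$) generated by $\mathrm{Sp}_{F'}(\mathcal M)$ (extended to $\mathcal M_{\mathbb R}$), together with $\infty$. *)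

theory Defs
  imports "HOL-Analysis.Analysis"
begin

definition subring_R :: "real set \<Rightarrow> bool" where
  "subring_R F \<longleftrightarrow> (\<forall>z::int. real_of_int z \<in> F) \<and>
     (\<forall>x\<in>F. \<forall>y\<in>F. x + y \<in> F \<and> x * y \<in> F \<and> - x \<in> F)"

definition Fvec :: "real set \<Rightarrow> (real^'r) set" where
  "Fvec F = {x. \<forall>i. x $ i \<in> F}"

definition rat_cone :: "real set \<Rightarrow> (real^'r) set \<Rightarrow> bool" where
  "rat_cone F C \<longleftrightarrow> (\<exists>G. finite G \<and> G \<subseteq> Fvec F \<and>
     C = {x. \<exists>c. (\<forall>g\<in>G. 0 \<le> c g) \<and> x = (\<Sum>g\<in>G. c g *\<^sub>R g)})"

definition complete_fan :: "real set \<Rightarrow> (real^'r) set set \<Rightarrow> bool" where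
  "complete_fan F \<Phi> \<longleftrightarrow> finite \<Phi> \<and> (\<forall>C\<in>\<Phi>. rat_cone F C) \<and>
     (\<forall>C\<in>\<Phi>. \<forall>D. D face_of C \<and> D \<noteq> {} \<longrightarrow> D \<in> \<Phi>) \<and>
     (\<forall>C\<in>\<Phi>. \<forall>D\<in>\<Phi>. (C \<inter> D) face_of C \<and> (C \<inter> D) face_of D) \<and>
     \<Union>\<Phi> = UNIV"

definition pw_F_linear :: "real set \<Rightarrow> (real^'r \<Rightarrow> real^'r) \<Rightarrow> bool" where
  "pw_F_linear F f \<longleftrightarrow> continuous_on UNIV f \<and>
     (\<exists>\<Phi>. complete_fan F \<Phi> \<and>
        (\<forall>C\<in>\<Phi>. \<exists>A::real^'r^'r. (\<forall>i j. A $ i $ j \<in> F) \<and> (\<forall>x\<in>C. f x = A *v x)))"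

text \<open>A polyptych lattice of rank CARD('r) over F: index set I, chart M_alpha = F^r
  (inside R^r), mutations mu alpha beta (given through their real extensions).\<close>
definition polyptych :: "real set \<Rightarrow> 'i set \<Rightarrow> ('i \<Rightarrow> 'i \<Rightarrow> real^'r \<Rightarrow> real^'r) \<Rightarrow> bool" where
  "polyptych F I mu \<longleftrightarrow> I \<noteq> {} \<and>
     (\<forall>\<alpha>\<in>I. \<forall>\<beta>\<in>I. pw_F_linear F (mu \<alpha> \<beta>)) \<and>
     (\<forall>\<alpha>\<in>I. mu \<alpha> \<alpha> = id) \<and>
     (\<forall>\<alpha>\<in>I. \<forall>\<beta>\<in>I. mu \<alpha> \<beta> \<circ> mu \<beta> \<alpha> = id) \<and>
     (\<forall>\<alpha>\<in>I. \<forall>\<beta>\<in>I. \<forall>\<gamma>\<in>I. mu \<beta> \<gamma> \<circ> mu \<alpha> \<beta> = mu \<alpha> \<gamma>)"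

definition finite_polyptych :: "real set \<Rightarrow> 'i set \<Rightarrow> ('i \<Rightarrow> 'i \<Rightarrow> real^'r \<Rightarrow> real^'r) \<Rightarrow> bool" where
  "finite_polyptych F I mu \<longleftrightarrow> polyptych F I mu \<and> finite I"

text \<open>Elements of M_R: compatible families of chart coordinates (the class of
  (alpha, x) is the family beta |-> mu alpha beta x).  pi_alpha m = m alpha.\<close>
definition elems_R :: "'i set \<Rightarrow> ('i \<Rightarrow> 'i \<Rightarrow> real^'r \<Rightarrow> real^'r) \<Rightarrow> ('i \<Rightarrow> real^'r) set" where
  "elems_R I mu = {m. (\<forall>\<beta>. \<beta> \<notin> I \<longrightarrow> m \<beta> = undefined) \<and>
                      (\<forall>\<alpha>\<in>I. \<forall>\<beta>\<in>I. m \<beta> = mu \<alpha> \<beta> (m \<alpha>))}"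

definition elems :: "real set \<Rightarrow> 'i set \<Rightarrow> ('i \<Rightarrow> 'i \<Rightarrow> real^'r \<Rightarrow> real^'r) \<Rightarrow> ('i \<Rightarrow> real^'r) set" where
  "elems F' I mu = {m \<in> elems_R I mu. \<forall>\<alpha>\<in>I. m \<alpha> \<in> Fvec F'}"

definition chart_inv :: "'i set \<Rightarrow> ('i \<Rightarrow> 'i \<Rightarrow> real^'r \<Rightarrow> real^'r) \<Rightarrow> 'i \<Rightarrow> real^'r \<Rightarrow> ('i \<Rightarrow> real^'r)" where
  "chart_inv I mu \<alpha> x = (\<lambda>\<beta>. if \<beta> \<in> I then mu \<alpha> \<beta> x else undefined)"

definition padd :: "'i set \<Rightarrow> ('i \<Rightarrow> 'i \<Rightarrow> real^'r \<Rightarrow> real^'r) \<Rightarrow> 'i \<Rightarrow> ('i \<Rightarrow> real^'r) \<Rightarrow> ('i \<Rightarrow> real^'r) \<Rightarrow> ('i \<Rightarrow> real^'r)" where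
  "padd I mu \<alpha> m m' = chart_inv I mu \<alpha> (m \<alpha> + m' \<alpha>)"

text \<open>lambda m (independent of the chart used; we use a fixed chart of I)\<close>
definition psmul :: "'i set \<Rightarrow> ('i \<Rightarrow> 'i \<Rightarrow> real^'r \<Rightarrow> real^'r) \<Rightarrow> real \<Rightarrow> ('i \<Rightarrow> real^'r) \<Rightarrow> ('i \<Rightarrow> real^'r)" where
  "psmul I mu c m = (let \<alpha> = (SOME \<alpha>. \<alpha> \<in> I) in chart_inv I mu \<alpha> (c *\<^sub>R m \<alpha>))"

definition Sp :: "real set \<Rightarrow> 'i set \<Rightarrow> ('i \<Rightarrow> 'i \<Rightarrow> real^'r \<Rightarrow> real^'r) \<Rightarrow> (('i \<Rightarrow> real^'r) \<Rightarrow> real) set" where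
  "Sp F' I mu = {p. p \<in> extensional (elems F' I mu) \<and>
     (\<forall>m\<in>elems F' I mu. p m \<in> F') \<and>
     (\<forall>m\<in>elems F' I mu. \<forall>m'\<in>elems F' I mu.
         p m + p m' = Min ((\<lambda>\<alpha>. p (padd I mu \<alpha> m m')) ` I)) \<and>
     (\<forall>c\<in>F'. 0 \<le> c \<longrightarrow> (\<forall>m\<in>elems F' I mu. p (psmul I mu c m) = c * p m))}"

definition Sp_chart :: "'i set \<Rightarrow> ('i \<Rightarrow> 'i \<Rightarrow> real^'r \<Rightarrow> real^'r) \<Rightarrow> 'i \<Rightarrow> (('i \<Rightarrow> real^'r) \<Rightarrow> real) set" where
  "Sp_chart I mu \<gamma> = {p \<in> Sp UNIV I mu. \<exists>L::real^'r \<Rightarrow> real. linear L \<and>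
        (\<forall>m\<in>elems UNIV I mu. p m = L (m \<gamma>))}"

definition ext_pt :: "real set \<Rightarrow> 'i set \<Rightarrow> ('i \<Rightarrow> 'i \<Rightarrow> real^'r \<Rightarrow> real^'r) \<Rightarrow> (('i \<Rightarrow> real^'r) \<Rightarrow> real) \<Rightarrow> (('i \<Rightarrow> real^'r) \<Rightarrow> real)" where
  "ext_pt F' I mu p = (THE q. q \<in> Sp UNIV I mu \<and> (\<forall>m\<in>elems F' I mu. q m = p m))"

definition lin_fan :: "real set \<Rightarrow> 'i set \<Rightarrow> ('i \<Rightarrow> 'i \<Rightarrow> real^'r \<Rightarrow> real^'r) \<Rightarrow> ('i \<Rightarrow> real^'r) set set \<Rightarrow> bool" where
  "lin_fan F I mu \<Sigma> \<longleftrightarrow> finite \<Sigma> \<and> (\<forall>C\<in>\<Sigma>. C \<subseteq> elems UNIV I mu) \<and>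
     (\<forall>\<alpha>\<in>I. complete_fan F ((\<lambda>C. (\<lambda>m. m \<alpha>) ` C) ` \<Sigma>)) \<and>
     (\<forall>\<alpha>\<in>I. \<forall>\<beta>\<in>I. \<forall>C\<in>\<Sigma>. \<exists>L::real^'r \<Rightarrow> real^'r. linear L \<and>
         (\<forall>m\<in>C. mu \<alpha> \<beta> (m \<alpha>) = L (m \<alpha>)))"

definition Sigma_fan :: "real set \<Rightarrow> 'i set \<Rightarrow> ('i \<Rightarrow> 'i \<Rightarrow> real^'r \<Rightarrow> real^'r) \<Rightarrow> ('i \<Rightarrow> real^'r) set set" where
  "Sigma_fan F I mu = (THE \<Sigma>. lin_fan F I mu \<Sigma> \<and>
      (\<forall>\<Sigma>'. lin_fan F I mu \<Sigma>' \<longrightarrow> (\<forall>C'\<in>\<Sigma>'. \<exists>C\<in>\<Sigma>. C' \<subseteq> C)))"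

definition max_cones :: "real set \<Rightarrow> 'i set \<Rightarrow> ('i \<Rightarrow> 'i \<Rightarrow> real^'r \<Rightarrow> real^'r) \<Rightarrow> ('i \<Rightarrow> real^'r) set set" where
  "max_cones F I mu = {C \<in> Sigma_fan F I mu.
      \<exists>\<alpha>\<in>I. aff_dim ((\<lambda>m. m \<alpha>) ` C) = int CARD('r)}"

definition strict_dual_pair ::
  "real set \<Rightarrow> real set \<Rightarrow> 'i set \<Rightarrow> ('i \<Rightarrow> 'i \<Rightarrow> real^'r \<Rightarrow> real^'r)
   \<Rightarrow> 'j set \<Rightarrow> ('j \<Rightarrow> 'j \<Rightarrow> real^'s \<Rightarrow> real^'s)
   \<Rightarrow> (('i \<Rightarrow> real^'r) \<Rightarrow> ('j \<Rightarrow> real^'s) \<Rightarrow> real)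
   \<Rightarrow> (('j \<Rightarrow> real^'s) \<Rightarrow> ('i \<Rightarrow> real^'r) \<Rightarrow> real) \<Rightarrow> bool" where
  "strict_dual_pair F F' I mu J nu v w \<longleftrightarrow>
     (\<forall>m\<in>elems UNIV I mu. v m \<in> Sp UNIV J nu) \<and>
     (\<forall>n\<in>elems UNIV J nu. w n \<in> Sp UNIV I mu) \<and>
     (\<forall>m\<in>elems F' I mu. restrict (v m) (elems F' J nu) \<in> Sp F' J nu) \<and>
     (\<forall>n\<in>elems F' J nu. restrict (w n) (elems F' I mu) \<in> Sp F' I mu) \<and>
     (\<forall>m\<in>elems F' I mu. \<forall>n\<in>elems F' J nu. v m n = w n m) \<and>
     bij_betw (\<lambda>m. restrict (v m) (elems F' J nu)) (elems F' I mu) (Sp F' J nu) \<and>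
     bij_betw (\<lambda>n. restrict (w n) (elems F' I mu)) (elems F' J nu) (Sp F' I mu) \<and>
     (\<lambda>\<gamma>. {m \<in> elems UNIV I mu. v m \<in> Sp_chart J nu \<gamma>}) ` J = max_cones F I mu \<and>
     (\<lambda>\<gamma>. {n \<in> elems UNIV J nu. w n \<in> Sp_chart I mu \<gamma>}) ` I = max_cones F J nu"

record 'a semialg =
  scar :: "'a set"
  spl :: "'a \<Rightarrow> 'a \<Rightarrow> 'a"
  stm :: "'a \<Rightarrow> 'a \<Rightarrow> 'a"
  ssc :: "real \<Rightarrow> 'a \<Rightarrow> 'a"
  sinf :: 'a

definition sa_iso :: "real set \<Rightarrow> ('a \<Rightarrow> 'b) \<Rightarrow> 'a semialg \<Rightarrow> 'b semialg \<Rightarrow> bool" where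
  "sa_iso F \<Phi> A B \<longleftrightarrow> bij_betw \<Phi> (scar A) (scar B) \<and>
     (\<forall>x\<in>scar A. \<forall>y\<in>scar A. \<Phi> (spl A x y) = spl B (\<Phi> x) (\<Phi> y) \<and>
                             \<Phi> (stm A x y) = stm B (\<Phi> x) (\<Phi> y)) \<and>
     (\<forall>c\<in>F. 0 \<le> c \<longrightarrow> (\<forall>x\<in>scar A. \<Phi> (ssc A c x) = ssc B c (\<Phi> x))) \<and>
     \<Phi> (sinf A) = sinf B"

definition halfsp :: "real set \<Rightarrow> 'i set \<Rightarrow> ('i \<Rightarrow> 'i \<Rightarrow> real^'r \<Rightarrow> real^'r) \<Rightarrow> (('i \<Rightarrow> real^'r) \<Rightarrow> real) \<Rightarrow> real \<Rightarrow> ('i \<Rightarrow> real^'r) set" where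
  "halfsp F' I mu p a = {m \<in> elems F' I mu. a \<le> p m}"

definition pconv :: "real set \<Rightarrow> 'i set \<Rightarrow> ('i \<Rightarrow> 'i \<Rightarrow> real^'r \<Rightarrow> real^'r) \<Rightarrow> ('i \<Rightarrow> real^'r) set \<Rightarrow> ('i \<Rightarrow> real^'r) set" where
  "pconv F' I mu S = elems F' I mu \<inter>
     \<Inter>{halfsp F' I mu p a | p a. p \<in> Sp F' I mu \<and> a \<in> F' \<and> S \<subseteq> halfsp F' I mu p a}"

definition finne :: "real set \<Rightarrow> 'i set \<Rightarrow> ('i \<Rightarrow> 'i \<Rightarrow> real^'r \<Rightarrow> real^'r) \<Rightarrow> ('i \<Rightarrow> real^'r) set set" where
  "finne F' I mu = {S. finite S \<and> S \<noteq> {} \<and> S \<subseteq> elems F' I mu}"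

text \<open>Identification of formal sums: bigoplus_S m = bigoplus_S' m iff p-conv(S) = p-conv(S').\<close>
definition pcrel :: "real set \<Rightarrow> 'i set \<Rightarrow> ('i \<Rightarrow> 'i \<Rightarrow> real^'r \<Rightarrow> real^'r) \<Rightarrow> (('i \<Rightarrow> real^'r) set \<times> ('i \<Rightarrow> real^'r) set) set" where
  "pcrel F' I mu = {(S, T). S \<in> finne F' I mu \<and> T \<in> finne F' I mu \<and>
                           pconv F' I mu S = pconv F' I mu T}"

definition cls :: "real set \<Rightarrow> 'i set \<Rightarrow> ('i \<Rightarrow> 'i \<Rightarrow> real^'r \<Rightarrow> real^'r) \<Rightarrow> ('i \<Rightarrow> real^'r) set \<Rightarrow> ('i \<Rightarrow> real^'r) set set" where
  "cls F' I mu S = pcrel F' I mu `` {S}"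

definition rep :: "'a set set \<Rightarrow> 'a set" where
  "rep X = (SOME S. S \<in> X)"

text \<open>S_{M_{F'}}: None is the identity infinity; Some X is the class X of the formal
  sum over any representative S in X.\<close>
definition canon_sa :: "real set \<Rightarrow> 'i set \<Rightarrow> ('i \<Rightarrow> 'i \<Rightarrow> real^'r \<Rightarrow> real^'r) \<Rightarrow> ('i \<Rightarrow> real^'r) set set option semialg" where
  "canon_sa F' I mu =
    \<lparr> scar = insert None (Some ` (finne F' I mu // pcrel F' I mu)),
      spl = (\<lambda>x y. case (x, y) of
                (None, _) \<Rightarrow> y
              | (_, None) \<Rightarrow> x
              | (Some X, Some Y) \<Rightarrow> Some (cls F' I mu (rep X \<union> rep Y))),
      stm = (\<lambda>x y. case (x, y) of
                (Some X, Some Y) \<Rightarrow> Some (cls F' I mu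
                    {padd I mu \<alpha> s t | \<alpha> s t. \<alpha> \<in> I \<and> s \<in> rep X \<and> t \<in> rep Y})
              | _ \<Rightarrow> None),
      ssc = (\<lambda>c x. map_option (\<lambda>X. cls F' I mu (psmul I mu c ` rep X)) x),
      sinf = None \<rparr>"

text \<open>Functions M_R -> R \<union> {infinity}: None is the constant infinity, Some f a real function
  (extensional on M_R).  Operations: pointwise min, pointwise +, scaling.\<close>
definition ppl :: "'a set \<Rightarrow> ('a \<Rightarrow> real) option \<Rightarrow> ('a \<Rightarrow> real) option \<Rightarrow> ('a \<Rightarrow> real) option" where
  "ppl D x y = (case (x, y) of
       (None, _) \<Rightarrow> y
     | (_, None) \<Rightarrow> x
     | (Some f, Some g) \<Rightarrow> Some (restrict (\<lambda>m. min (f m) (g m)) D))"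

definition ptm :: "'a set \<Rightarrow> ('a \<Rightarrow> real) option \<Rightarrow> ('a \<Rightarrow> real) option \<Rightarrow> ('a \<Rightarrow> real) option" where
  "ptm D x y = (case (x, y) of
       (Some f, Some g) \<Rightarrow> Some (restrict (\<lambda>m. f m + g m) D)
     | _ \<Rightarrow> None)"

definition psc :: "'a set \<Rightarrow> real \<Rightarrow> ('a \<Rightarrow> real) option \<Rightarrow> ('a \<Rightarrow> real) option" where
  "psc D c x = map_option (\<lambda>f. restrict (\<lambda>m. c * f m) D) x"

definition point_sa :: "real set \<Rightarrow> real set \<Rightarrow> 'i set \<Rightarrow> ('i \<Rightarrow> 'i \<Rightarrow> real^'r \<Rightarrow> real^'r) \<Rightarrow> (('i \<Rightarrow> real^'r) \<Rightarrow> real) option semialg" where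
  "point_sa F F' I mu =
    \<lparr> scar = \<Inter>{X. None \<in> X \<and>
                  (\<forall>p\<in>Sp F' I mu. Some (ext_pt F' I mu p) \<in> X) \<and>
                  (\<forall>x\<in>X. \<forall>y\<in>X. ppl (elems UNIV I mu) x y \<in> X \<and> ptm (elems UNIV I mu) x y \<in> X) \<and>
                  (\<forall>c\<in>F. 0 \<le> c \<longrightarrow> (\<forall>x\<in>X. psc (elems UNIV I mu) c x \<in> X))},
      spl = ppl (elems UNIV I mu),
      stm = ptm (elems UNIV I mu),
      ssc = psc (elems UNIV I mu),
      sinf = None \<rparr>"

end

theory Submission imports Defs begin
lemma ext_eq:
  fixes h1 h2 :: "real^'r \<Rightarrow> real"
  assumes c1: "continuous_on UNIV h1" and c2: "continuous_on UNIV h2"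
    and hom1: "\<And>c x. 0 \<le> c \<Longrightarrow> h1 (c *\<^sub>R x) = c * h1 x"
    and hom2: "\<And>c x. 0 \<le> c \<Longrightarrow> h2 (c *\<^sub>R x) = c * h2 x"
    and eq: "\<And>z. (\<forall>i. z$i \<in> \<int>) \<Longrightarrow> h1 z = h2 z"
  shows "h1 x = h2 x"
proof -
  define z where "z k = (\<chi> i. real_of_int \<lfloor>real (Suc k) * x$i\<rfloor>)" for k
  define y where "y k = inverse (real (Suc k)) *\<^sub>R z k" for k
  have zi: "\<forall>i. z k $ i \<in> \<int>" for k by (simp add: z_def)
  have hy: "h1 (y k) = h2 (y k)" for k
    unfolding y_def using hom1 hom2 eq[OF zi] by simp
  have comp: "(\<lambda>k. y k $ i) \<longlonglongrightarrow> x $ i" for i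
  proof (rule real_tendsto_sandwich[where f="\<lambda>k. x$i + - inverse (real (Suc k))" and h="\<lambda>k. x$i"])
    show "\<forall>\<^sub>F k in sequentially. x $ i + - inverse (real (Suc k)) \<le> y k $ i"
    proof (rule always_eventually, rule allI)
      fix k
      have "real (Suc k) * x$i - 1 \<le> real_of_int \<lfloor>real (Suc k) * x$i\<rfloor>" by linarith
      hence "(real (Suc k) * x$i - 1) / real (Suc k) \<le> real_of_int \<lfloor>real (Suc k) * x$i\<rfloor> / real (Suc k)"
        by (simp add: divide_right_mono)
      thus "x $ i + - inverse (real (Suc k)) \<le> y k $ i"
        by (simp add: y_def z_def field_simps)
    qed
    show "\<forall>\<^sub>F k in sequentially. y k $ i \<le> x$i"
    proof (rule always_eventually, rule allI)
      fix k
      have "real_of_int \<lfloor>real (Suc k) * x$i\<rfloor> \<le> real (Suc k) * x$i" by linarith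
      hence "real_of_int \<lfloor>real (Suc k) * x$i\<rfloor> / real (Suc k) \<le> x$i"
        by (simp add: pos_divide_le_eq[of "real (Suc k)"] mult.commute[of "x$i"] del: of_nat_Suc)
      thus "y k $ i \<le> x$i"
        by (simp add: y_def z_def divide_inverse mult.commute)
    qed
    show "(\<lambda>k. x $ i + - inverse (real (Suc k))) \<longlonglongrightarrow> x $ i"
      by (rule LIMSEQ_inverse_real_of_nat_add_minus)
  qed simp
  have yl: "y \<longlonglongrightarrow> x" by (rule vec_tendstoI) (rule comp)
  have l1: "(\<lambda>k. h1 (y k)) \<longlonglongrightarrow> h1 x"
    by (rule continuous_on_tendsto_compose[OF c1 yl]) auto
  have l2: "(\<lambda>k. h2 (y k)) \<longlonglongrightarrow> h2 x"
    by (rule continuous_on_tendsto_compose[OF c2 yl]) auto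
  have "(\<lambda>k. h1 (y k)) = (\<lambda>k. h2 (y k))" using hy by (rule ext)
  with l1 have l1': "(\<lambda>k. h2 (y k)) \<longlonglongrightarrow> h1 x" by simp
  show ?thesis by (rule LIMSEQ_unique[OF l1' l2])
qed

lemma subring_sum:
  assumes "subring_R F'" "finite A" "\<And>a. a \<in> A \<Longrightarrow> f a \<in> F'"
  shows "sum f A \<in> F'"
  using assms(2,3)
proof (induction A rule: finite_induct)
  case empty
  have "real_of_int 0 \<in> F'" using assms(1) unfolding subring_R_def by blast
  then show ?case by simp
next
  case (insert x A)
  then show ?case using assms(1) unfolding subring_R_def by auto
qed

lemma subring_int: "subring_R F' \<Longrightarrow> z \<in> \<int> \<Longrightarrow> z \<in> F'"
  unfolding subring_R_def by (auto elim: Ints_cases)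

lemma subring_mult: "subring_R F' \<Longrightarrow> x \<in> F' \<Longrightarrow> y \<in> F' \<Longrightarrow> x * y \<in> F'"
  unfolding subring_R_def by auto

lemma Fvec_UNIV[simp]: "Fvec UNIV = UNIV"
  unfolding Fvec_def by auto

lemma elems_UNIV: "elems UNIV I mu = elems_R I mu"
  unfolding elems_def by auto

lemma elems_sub: "elems F' I mu \<subseteq> elems UNIV I mu"
  unfolding elems_def by auto

lemma Sp_D:
  assumes "p \<in> Sp F' I mu"
  shows "p \<in> extensional (elems F' I mu)"
    and "\<And>m. m \<in> elems F' I mu \<Longrightarrow> p m \<in> F'"
    and "\<And>m m'. m \<in> elems F' I mu \<Longrightarrow> m' \<in> elems F' I mu \<Longrightarrow>
            p m + p m' = Min ((\<lambda>\<alpha>. p (padd I mu \<alpha> m m')) ` I)"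
    and "\<And>c m. c \<in> F' \<Longrightarrow> 0 \<le> c \<Longrightarrow> m \<in> elems F' I mu \<Longrightarrow> p (psmul I mu c m) = c * p m"
proof -
  have H: "p \<in> extensional (elems F' I mu) \<and>
     (\<forall>m\<in>elems F' I mu. p m \<in> F') \<and>
     (\<forall>m\<in>elems F' I mu. \<forall>m'\<in>elems F' I mu.
         p m + p m' = Min ((\<lambda>\<alpha>. p (padd I mu \<alpha> m m')) ` I)) \<and>
     (\<forall>c\<in>F'. 0 \<le> c \<longrightarrow> (\<forall>m\<in>elems F' I mu. p (psmul I mu c m) = c * p m))"
    using assms unfolding Sp_def by (rule CollectD)
  show "p \<in> extensional (elems F' I mu)" using H by (rule conjunct1)
  show "p m \<in> F'" if "m \<in> elems F' I mu" for m
    using H[THEN conjunct2, THEN conjunct1] that by (rule bspec)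
  show "p m + p m' = Min ((\<lambda>\<alpha>. p (padd I mu \<alpha> m m')) ` I)"
    if "m \<in> elems F' I mu" "m' \<in> elems F' I mu" for m m'
    using H[THEN conjunct2, THEN conjunct2, THEN conjunct1, rule_format, OF that] .
  show "p (psmul I mu c m) = c * p m" if "c \<in> F'" "0 \<le> c" "m \<in> elems F' I mu" for c m
    using H[THEN conjunct2, THEN conjunct2, THEN conjunct2, rule_format, OF that] .
qed

context
  fixes F :: "real set" and I :: "'i set" and mu :: "'i \<Rightarrow> 'i \<Rightarrow> real^'r \<Rightarrow> real^'r"
  assumes poly: "polyptych F I mu"
begin

lemma poly_parts: "I \<noteq> {} \<and>
     (\<forall>\<alpha>\<in>I. \<forall>\<beta>\<in>I. pw_F_linear F (mu \<alpha> \<beta>)) \<and>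
     (\<forall>\<alpha>\<in>I. mu \<alpha> \<alpha> = id) \<and>
     (\<forall>\<alpha>\<in>I. \<forall>\<beta>\<in>I. mu \<alpha> \<beta> \<circ> mu \<beta> \<alpha> = id) \<and>
     (\<forall>\<alpha>\<in>I. \<forall>\<beta>\<in>I. \<forall>\<gamma>\<in>I. mu \<beta> \<gamma> \<circ> mu \<alpha> \<beta> = mu \<alpha> \<gamma>)"
  by (rule poly[unfolded polyptych_def])

lemma I_ne: "I \<noteq> {}" using poly_parts by (elim conjE)

lemma mu_pw: "a \<in> I \<Longrightarrow> b \<in> I \<Longrightarrow> pw_F_linear F (mu a b)"
proof -
  assume ab: "a \<in> I" "b \<in> I"
  have "\<forall>\<alpha>\<in>I. \<forall>\<beta>\<in>I. pw_F_linear F (mu \<alpha> \<beta>)" using poly_parts by (elim conjE)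
  from this[rule_format, OF ab] show ?thesis .
qed

lemma mu_id: "a \<in> I \<Longrightarrow> mu a a x = x"
proof -
  assume a: "a \<in> I"
  have "\<forall>\<alpha>\<in>I. mu \<alpha> \<alpha> = id" using poly_parts by (elim conjE)
  from this[rule_format, OF a] show ?thesis by simp
qed

lemma cocyc: "a \<in> I \<Longrightarrow> b \<in> I \<Longrightarrow> c \<in> I \<Longrightarrow> mu b c (mu a b x) = mu a c x"
proof -
  assume abc: "a \<in> I" "b \<in> I" "c \<in> I"
  have "\<forall>\<alpha>\<in>I. \<forall>\<beta>\<in>I. \<forall>\<gamma>\<in>I. mu \<beta> \<gamma> \<circ> mu \<alpha> \<beta> = mu \<alpha> \<gamma>" using poly_parts by (elim conjE)
  from this[rule_format, OF abc] have "mu b c \<circ> mu a b = mu a c" .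
  then show ?thesis by (metis comp_apply)
qed

lemma chart_inv_elems: "\<alpha> \<in> I \<Longrightarrow> chart_inv I mu \<alpha> x \<in> elems UNIV I mu"
  unfolding elems_UNIV elems_R_def chart_inv_def
  by (simp add: cocyc)

lemma chart_inv_at: "\<alpha> \<in> I \<Longrightarrow> chart_inv I mu \<alpha> x \<alpha> = x"
  unfolding chart_inv_def by (simp add: mu_id)

lemma elemsR_D1: "m \<in> elems UNIV I mu \<Longrightarrow> \<beta> \<notin> I \<Longrightarrow> m \<beta> = undefined"
proof -
  assume m: "m \<in> elems UNIV I mu" and b: "\<beta> \<notin> I"
  have "\<forall>\<beta>. \<beta> \<notin> I \<longrightarrow> m \<beta> = undefined"
    using m unfolding elems_UNIV elems_R_def mem_Collect_eq by (elim conjE)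
  from this[rule_format, OF b] show ?thesis .
qed

lemma elemsR_D2: "m \<in> elems UNIV I mu \<Longrightarrow> a \<in> I \<Longrightarrow> b \<in> I \<Longrightarrow> m b = mu a b (m a)"
proof -
  assume m: "m \<in> elems UNIV I mu" and ab: "a \<in> I" "b \<in> I"
  have "\<forall>\<alpha>\<in>I. \<forall>\<beta>\<in>I. m \<beta> = mu \<alpha> \<beta> (m \<alpha>)"
    using m unfolding elems_UNIV elems_R_def mem_Collect_eq by (elim conjE)
  from this[rule_format, OF ab] show ?thesis .
qed

lemma chart_inv_self: "\<alpha> \<in> I \<Longrightarrow> m \<in> elems UNIV I mu \<Longrightarrow> chart_inv I mu \<alpha> (m \<alpha>) = m"
proof (rule ext)
  fix \<beta> assume a: "\<alpha> \<in> I" and m: "m \<in> elems UNIV I mu"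
  show "chart_inv I mu \<alpha> (m \<alpha>) \<beta> = m \<beta>"
  proof (cases "\<beta> \<in> I")
    case True
    then show ?thesis unfolding chart_inv_def using elemsR_D2[OF m a True] by simp
  next
    case False
    then show ?thesis unfolding chart_inv_def using elemsR_D1[OF m False] by simp
  qed
qed

lemma mu_Fvec:
  assumes F': "subring_R F'" "F \<subseteq> F'" and ab: "\<alpha> \<in> I" "\<beta> \<in> I" and x: "x \<in> Fvec F'"
  shows "mu \<alpha> \<beta> x \<in> Fvec F'"
proof -
  have "pw_F_linear F (mu \<alpha> \<beta>)" using ab by (rule mu_pw)
  then obtain \<Phi> where fan: "complete_fan F \<Phi>" and lin: "\<forall>C\<in>\<Phi>. \<exists>A::real^'r^'r. (\<forall>i j. A $ i $ j \<in> F) \<and> (\<forall>x\<in>C. mu \<alpha> \<beta> x = A *v x)"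
    unfolding pw_F_linear_def by blast
  from fan have "x \<in> \<Union>\<Phi>" unfolding complete_fan_def by auto
  then obtain C where "C \<in> \<Phi>" "x \<in> C" by auto
  with lin obtain A :: "real^'r^'r" where A: "\<forall>i j. A $ i $ j \<in> F" "mu \<alpha> \<beta> x = A *v x" by blast
  show ?thesis unfolding Fvec_def
  proof (safe)
    fix i
    have "(A *v x) $ i = (\<Sum>j\<in>UNIV. A $ i $ j * x $ j)" by (simp add: matrix_vector_mult_def)
    also have "\<dots> \<in> F'"
      by (rule subring_sum[OF F'(1)]) (use A F' x in \<open>auto simp: Fvec_def intro!: subring_mult\<close>)
    finally show "mu \<alpha> \<beta> x $ i \<in> F'" using A by simp
  qed
qed

lemma chart_inv_elemsF:
  assumes F': "subring_R F'" "F \<subseteq> F'" and a: "\<alpha> \<in> I" and x: "x \<in> Fvec F'"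
  shows "chart_inv I mu \<alpha> x \<in> elems F' I mu"
  using chart_inv_elems[OF a] mu_Fvec[OF F' a _ x] unfolding elems_def elems_UNIV chart_inv_def
  by auto

lemma a0_in: "(SOME \<alpha>. \<alpha> \<in> I) \<in> I"
  using I_ne by (simp add: some_in_eq)

lemma padd_elemsF:
  assumes F': "subring_R F'" "F \<subseteq> F'" and a: "\<alpha> \<in> I"
    and m: "m \<in> elems F' I mu" and m': "m' \<in> elems F' I mu"
  shows "padd I mu \<alpha> m m' \<in> elems F' I mu"
  unfolding padd_def
proof (rule chart_inv_elemsF[OF F' a])
  show "m \<alpha> + m' \<alpha> \<in> Fvec F'" using m m' a F'(1)
    unfolding elems_def Fvec_def subring_R_def by auto
qed

lemma padd_elems:
  assumes a: "\<alpha> \<in> I"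
  shows "padd I mu \<alpha> m m' \<in> elems UNIV I mu"
  unfolding padd_def by (rule chart_inv_elems[OF a])

lemma psmul_elemsF:
  assumes F': "subring_R F'" "F \<subseteq> F'" and c: "c \<in> F'"
    and m: "m \<in> elems F' I mu"
  shows "psmul I mu c m \<in> elems F' I mu"
  unfolding psmul_def Let_def
proof (rule chart_inv_elemsF[OF F' a0_in])
  show "c *\<^sub>R m (SOME \<alpha>. \<alpha> \<in> I) \<in> Fvec F'" using m a0_in F'(1) c
    unfolding elems_def Fvec_def subring_R_def by auto
qed

lemma psmul_chart: "psmul I mu c (chart_inv I mu (SOME \<alpha>. \<alpha> \<in> I) x) = chart_inv I mu (SOME \<alpha>. \<alpha> \<in> I) (c *\<^sub>R x)"
  unfolding psmul_def Let_def using chart_inv_at[OF a0_in] by simp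

definition good :: "(('i \<Rightarrow> real^'r) \<Rightarrow> real) \<Rightarrow> bool" where
  "good h \<longleftrightarrow> continuous_on UNIV (\<lambda>x. h (chart_inv I mu (SOME \<alpha>. \<alpha> \<in> I) x)) \<and>
     (\<forall>c x. 0 \<le> c \<longrightarrow> h (chart_inv I mu (SOME \<alpha>. \<alpha> \<in> I) (c *\<^sub>R x)) = c * h (chart_inv I mu (SOME \<alpha>. \<alpha> \<in> I) x))"

lemma extM:
  assumes F': "subring_R F'" "F \<subseteq> F'" and g: "good h1" "good h2"
    and eq: "\<And>m. m \<in> elems F' I mu \<Longrightarrow> h1 m = h2 m"
    and m: "m \<in> elems UNIV I mu"
  shows "h1 m = h2 m"
proof -
  let ?a = "SOME \<alpha>. \<alpha> \<in> I"
  have "h1 (chart_inv I mu ?a (m ?a)) = h2 (chart_inv I mu ?a (m ?a))"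
  proof (rule ext_eq[of "\<lambda>x. h1 (chart_inv I mu ?a x)" "\<lambda>x. h2 (chart_inv I mu ?a x)"])
    show "continuous_on UNIV (\<lambda>x. h1 (chart_inv I mu ?a x))" "continuous_on UNIV (\<lambda>x. h2 (chart_inv I mu ?a x))"
      using g unfolding good_def by auto
    show "h1 (chart_inv I mu ?a (c *\<^sub>R x)) = c * h1 (chart_inv I mu ?a x)"
      "h2 (chart_inv I mu ?a (c *\<^sub>R x)) = c * h2 (chart_inv I mu ?a x)" if "0 \<le> c" for c x
      using g that unfolding good_def by auto
    show "h1 (chart_inv I mu ?a z) = h2 (chart_inv I mu ?a z)" if "\<forall>i. z $ i \<in> \<int>" for z
    proof (rule eq, rule chart_inv_elemsF[OF F' a0_in])
      show "z \<in> Fvec F'" using that subring_int[OF F'(1)] unfolding Fvec_def by auto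
    qed
  qed
  then show ?thesis using chart_inv_self[OF a0_in m] by simp
qed

lemma good_Sp:
  assumes fin: "finite I" and p: "p \<in> Sp UNIV I mu"
  shows "good p"
proof -
  let ?a = "SOME \<alpha>. \<alpha> \<in> I"
  define g where "g x = p (chart_inv I mu ?a x)" for x
  have hom: "g (c *\<^sub>R x) = c * g x" if "0 \<le> c" for c x
  proof -
    have "p (psmul I mu c (chart_inv I mu ?a x)) = c * p (chart_inv I mu ?a x)"
      using Sp_D(4)[OF p _ that chart_inv_elems[OF a0_in]] by simp
    then show ?thesis unfolding g_def psmul_chart .
  qed
  have sup: "g x + g y \<le> g (x + y)" for x y
  proof -
    have "p (chart_inv I mu ?a x) + p (chart_inv I mu ?a y) =
       Min ((\<lambda>\<alpha>. p (padd I mu \<alpha> (chart_inv I mu ?a x) (chart_inv I mu ?a y))) ` I)"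
      using Sp_D(3)[OF p chart_inv_elems[OF a0_in] chart_inv_elems[OF a0_in]] .
    also have "\<dots> \<le> p (padd I mu ?a (chart_inv I mu ?a x) (chart_inv I mu ?a y))"
      by (rule Min_le) (use fin a0_in in auto)
    also have "\<dots> = g (x + y)" unfolding padd_def g_def chart_inv_at[OF a0_in] ..
    finally show ?thesis unfolding g_def .
  qed
  have cv: "convex_on UNIV (\<lambda>x. - g x)"
  proof (rule convex_onI)
    fix t :: real and x y :: "real^'r" assume t: "0 < t" "t < 1"
    have "g ((1 - t) *\<^sub>R x) + g (t *\<^sub>R y) \<le> g ((1 - t) *\<^sub>R x + t *\<^sub>R y)" by (rule sup)
    then show "- g ((1 - t) *\<^sub>R x + t *\<^sub>R y) \<le> (1 - t) * - g x + t * - g y"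
      using hom[of "1 - t" x] hom[of t y] t by simp
  qed simp
  have "continuous_on UNIV (\<lambda>x. - g x)" by (rule convex_on_continuous[OF open_UNIV cv])
  then have "continuous_on UNIV (\<lambda>x. - (- g x))" by (rule continuous_on_minus)
  then show ?thesis unfolding good_def using hom by (simp add: g_def)
qed

lemma good_add: "good h1 \<Longrightarrow> good h2 \<Longrightarrow> good (\<lambda>m. h1 m + h2 m)"
  unfolding good_def
  by (simp add: distrib_left continuous_on_add)

lemma good_cmult: "good h \<Longrightarrow> good (\<lambda>m. c * h m)"
  unfolding good_def by (simp add: continuous_on_mult_left)

lemma good_Min:
  assumes "finite A" "A \<noteq> {}" "\<And>a. a \<in> A \<Longrightarrow> good (f a)"
  shows "good (\<lambda>m. Min ((\<lambda>a. f a m) ` A))"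
  using assms
proof (induction A rule: finite_ne_induct)
  case (singleton x)
  then show ?case by simp
next
  case (insert x A)
  have eq: "(\<lambda>m. Min ((\<lambda>a. f a m) ` insert x A)) = (\<lambda>m. min (f x m) (Min ((\<lambda>a. f a m) ` A)))"
    using insert by (simp add: Min.insert)
  have gx: "good (f x)" and gA: "good (\<lambda>m. Min ((\<lambda>a. f a m) ` A))" using insert by auto
  let ?a = "SOME \<alpha>. \<alpha> \<in> I"
  have c1: "continuous_on UNIV (\<lambda>y. f x (chart_inv I mu ?a y))"
    and c2: "continuous_on UNIV (\<lambda>y. Min ((\<lambda>a. f a (chart_inv I mu ?a y)) ` A))"
    using gx gA unfolding good_def by auto
  have C: "continuous_on UNIV (\<lambda>y. min (f x (chart_inv I mu ?a y)) (Min ((\<lambda>a. f a (chart_inv I mu ?a y)) ` A)))"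
    by (rule continuous_on_min[OF c1 c2])
  have H: "min (f x (chart_inv I mu ?a (c *\<^sub>R y))) (Min ((\<lambda>a. f a (chart_inv I mu ?a (c *\<^sub>R y))) ` A))
     = c * min (f x (chart_inv I mu ?a y)) (Min ((\<lambda>a. f a (chart_inv I mu ?a y)) ` A))" if "0 \<le> c" for c y
  proof -
    have "f x (chart_inv I mu ?a (c *\<^sub>R y)) = c * f x (chart_inv I mu ?a y)"
      "Min ((\<lambda>a. f a (chart_inv I mu ?a (c *\<^sub>R y))) ` A) = c * Min ((\<lambda>a. f a (chart_inv I mu ?a y)) ` A)"
      using gx gA that unfolding good_def by auto
    then show ?thesis using that by (simp add: min_mult_distrib_left)
  qed
  show ?case unfolding eq good_def
  proof (intro conjI allI impI)
    fix c :: real and y assume "0 \<le> c"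
    then show "min (f x (chart_inv I mu ?a (c *\<^sub>R y))) (Min ((\<lambda>a. f a (chart_inv I mu ?a (c *\<^sub>R y))) ` A))
     = c * min (f x (chart_inv I mu ?a y)) (Min ((\<lambda>a. f a (chart_inv I mu ?a y)) ` A))" by (rule H)
  qed (rule C)
qed

end

locale dualp =
  fixes F F' :: "real set"
    and I :: "'i set" and mu :: "'i \<Rightarrow> 'i \<Rightarrow> real^'r \<Rightarrow> real^'r"
    and J :: "'j set" and nu :: "'j \<Rightarrow> 'j \<Rightarrow> real^'s \<Rightarrow> real^'s"
    and v :: "('i \<Rightarrow> real^'r) \<Rightarrow> ('j \<Rightarrow> real^'s) \<Rightarrow> real"
    and w :: "('j \<Rightarrow> real^'s) \<Rightarrow> ('i \<Rightarrow> real^'r) \<Rightarrow> real"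
  assumes sF: "subring_R F" and sF': "subring_R F'" and FF': "F \<subseteq> F'"
    and pI: "finite_polyptych F I mu" and pJ: "finite_polyptych F J nu"
    and sd: "strict_dual_pair F F' I mu J nu v w"
begin

lemma polyI: "polyptych F I mu" and finI: "finite I"
  using pI unfolding finite_polyptych_def by auto
lemma polyJ: "polyptych F J nu" and finJ: "finite J"
  using pJ unfolding finite_polyptych_def by auto

lemma sd_parts:
  "(\<forall>m\<in>elems UNIV I mu. v m \<in> Sp UNIV J nu) \<and>
     (\<forall>n\<in>elems UNIV J nu. w n \<in> Sp UNIV I mu) \<and>
     (\<forall>m\<in>elems F' I mu. restrict (v m) (elems F' J nu) \<in> Sp F' J nu) \<and>
     (\<forall>n\<in>elems F' J nu. restrict (w n) (elems F' I mu) \<in> Sp F' I mu) \<and>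
     (\<forall>m\<in>elems F' I mu. \<forall>n\<in>elems F' J nu. v m n = w n m) \<and>
     bij_betw (\<lambda>m. restrict (v m) (elems F' J nu)) (elems F' I mu) (Sp F' J nu) \<and>
     bij_betw (\<lambda>n. restrict (w n) (elems F' I mu)) (elems F' J nu) (Sp F' I mu)"
  using sd unfolding strict_dual_pair_def by (elim conjE) (intro conjI)

lemma v_Sp: assumes "m \<in> elems UNIV I mu" shows "v m \<in> Sp UNIV J nu"
proof -
  have "(\<forall>m\<in>elems UNIV I mu. v m \<in> Sp UNIV J nu)" using sd_parts by (elim conjE)
  with assms show ?thesis by blast
qed
lemma w_Sp: assumes "n \<in> elems UNIV J nu" shows "w n \<in> Sp UNIV I mu"
proof -
  have "(\<forall>n\<in>elems UNIV J nu. w n \<in> Sp UNIV I mu)" using sd_parts by (elim conjE)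
  with assms show ?thesis by blast
qed
lemma vF_Sp: assumes "m \<in> elems F' I mu" shows "restrict (v m) (elems F' J nu) \<in> Sp F' J nu"
proof -
  have "(\<forall>m\<in>elems F' I mu. restrict (v m) (elems F' J nu) \<in> Sp F' J nu)" using sd_parts by (elim conjE)
  with assms show ?thesis by blast
qed
lemma wF_Sp: assumes "n \<in> elems F' J nu" shows "restrict (w n) (elems F' I mu) \<in> Sp F' I mu"
proof -
  have "(\<forall>n\<in>elems F' J nu. restrict (w n) (elems F' I mu) \<in> Sp F' I mu)" using sd_parts by (elim conjE)
  with assms show ?thesis by blast
qed
lemma vw: assumes "m \<in> elems F' I mu" and "n \<in> elems F' J nu" shows "v m n = w n m"
proof -
  have "(\<forall>m\<in>elems F' I mu. \<forall>n\<in>elems F' J nu. v m n = w n m)" using sd_parts by (elim conjE)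
  with assms show ?thesis by blast
qed
lemma v_surj: "p \<in> Sp F' J nu \<Longrightarrow> \<exists>m\<in>elems F' I mu. p = restrict (v m) (elems F' J nu)"
proof -
  assume p: "p \<in> Sp F' J nu"
  have "bij_betw (\<lambda>m. restrict (v m) (elems F' J nu)) (elems F' I mu) (Sp F' J nu)"
    using sd_parts by (elim conjE)
  then have "(\<lambda>m. restrict (v m) (elems F' J nu)) ` elems F' I mu = Sp F' J nu"
    by (rule bij_betw_imp_surj_on)
  with p show ?thesis by blast
qed
lemma w_surj: "p \<in> Sp F' I mu \<Longrightarrow> \<exists>n\<in>elems F' J nu. p = restrict (w n) (elems F' I mu)"
proof -
  assume p: "p \<in> Sp F' I mu"
  have "bij_betw (\<lambda>n. restrict (w n) (elems F' I mu)) (elems F' J nu) (Sp F' I mu)"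
    using sd_parts by (elim conjE)
  then have "(\<lambda>n. restrict (w n) (elems F' I mu)) ` elems F' J nu = Sp F' I mu"
    by (rule bij_betw_imp_surj_on)
  with p show ?thesis by blast
qed

lemma v_F': "m \<in> elems F' I mu \<Longrightarrow> n \<in> elems F' J nu \<Longrightarrow> v m n \<in> F'"
proof -
  assume m: "m \<in> elems F' I mu" and n: "n \<in> elems F' J nu"
  have "restrict (v m) (elems F' J nu) n \<in> F'" using Sp_D(2)[OF vF_Sp[OF m] n] .
  then show ?thesis using n by simp
qed

lemma w_ext: "n \<in> elems UNIV J nu \<Longrightarrow> w n \<in> extensional (elems UNIV I mu)"
  by (rule Sp_D(1)[OF w_Sp])

lemma good_w: "n \<in> elems UNIV J nu \<Longrightarrow> good I mu (w n)"
  by (rule good_Sp[OF polyI finI w_Sp])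

lemma NF_NR: "n \<in> elems F' J nu \<Longrightarrow> n \<in> elems UNIV J nu"
  using elems_sub by blast
lemma MF_MR: "m \<in> elems F' I mu \<Longrightarrow> m \<in> elems UNIV I mu"
  using elems_sub by blast

definition fS :: "('j \<Rightarrow> real^'s) set \<Rightarrow> ('i \<Rightarrow> real^'r) \<Rightarrow> real" where
  "fS S = restrict (\<lambda>m. Min ((\<lambda>n. w n m) ` S)) (elems UNIV I mu)"

lemma pconv_char:
  assumes S: "S \<in> finne F' J nu"
  shows "pconv F' J nu S = {n \<in> elems F' J nu. \<forall>m\<in>elems F' I mu. Min ((\<lambda>s. w s m) ` S) \<le> w n m}"
proof -
  have Sf: "finite S" "S \<noteq> {}" "S \<subseteq> elems F' J nu" using S unfolding finne_def by auto
  show ?thesis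
  proof (intro set_eqI iffI)
    fix n assume n: "n \<in> pconv F' J nu S"
    then have nF: "n \<in> elems F' J nu" unfolding pconv_def by blast
    show "n \<in> {n \<in> elems F' J nu. \<forall>m\<in>elems F' I mu. Min ((\<lambda>s. w s m) ` S) \<le> w n m}"
    proof (intro CollectI conjI ballI nF)
      fix m assume m: "m \<in> elems F' I mu"
      define p where "p = restrict (v m) (elems F' J nu)"
      define a where "a = Min ((\<lambda>s. w s m) ` S)"
      have p: "p \<in> Sp F' J nu" unfolding p_def by (rule vF_Sp[OF m])
      have "a \<in> (\<lambda>s. w s m) ` S" unfolding a_def using Sf by (intro Min_in) auto
      then obtain s0 where s0: "s0 \<in> S" "a = w s0 m" by blast
      have aF: "a \<in> F'" using s0 Sf v_F'[OF m, of s0] vw[OF m, of s0] by auto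
      have "S \<subseteq> halfsp F' J nu p a"
      proof
        fix s assume s: "s \<in> S"
        have "a \<le> w s m" unfolding a_def using Sf s by (intro Min_le) auto
        then show "s \<in> halfsp F' J nu p a" unfolding halfsp_def p_def using s Sf vw[OF m, of s] by auto
      qed
      then have "n \<in> halfsp F' J nu p a" using n p aF unfolding pconv_def by blast
      then show "Min ((\<lambda>s. w s m) ` S) \<le> w n m"
        unfolding halfsp_def p_def a_def using nF vw[OF m nF] by auto
    qed
  next
    fix n assume n: "n \<in> {n \<in> elems F' J nu. \<forall>m\<in>elems F' I mu. Min ((\<lambda>s. w s m) ` S) \<le> w n m}"
    then have nF: "n \<in> elems F' J nu" and nc: "\<And>m. m \<in> elems F' I mu \<Longrightarrow> Min ((\<lambda>s. w s m) ` S) \<le> w n m"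
      by auto
    show "n \<in> pconv F' J nu S" unfolding pconv_def
    proof (intro IntI nF InterI)
      fix H assume "H \<in> {halfsp F' J nu p a |p a. p \<in> Sp F' J nu \<and> a \<in> F' \<and> S \<subseteq> halfsp F' J nu p a}"
      then obtain p a where H: "H = halfsp F' J nu p a" and p: "p \<in> Sp F' J nu" and a: "a \<in> F'"
        and SH: "S \<subseteq> halfsp F' J nu p a" by blast
      obtain m where m: "m \<in> elems F' I mu" and pm: "p = restrict (v m) (elems F' J nu)"
        using v_surj[OF p] by blast
      have "a \<le> w s m" if s: "s \<in> S" for s
      proof -
        have "a \<le> p s" using SH s unfolding halfsp_def by blast
        then show ?thesis using pm s Sf vw[OF m, of s] by auto
      qed
      then have "a \<le> Min ((\<lambda>s. w s m) ` S)" using Sf by (intro Min.boundedI) auto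
      also have "\<dots> \<le> w n m" by (rule nc[OF m])
      finally have "a \<le> p n" using pm nF vw[OF m nF] by simp
      then show "n \<in> H" unfolding H halfsp_def using nF by blast
    qed
  qed
qed

lemma pconv_eq_iff:
  assumes S: "S \<in> finne F' J nu" and T: "T \<in> finne F' J nu"
  shows "pconv F' J nu S = pconv F' J nu T \<longleftrightarrow>
     (\<forall>m\<in>elems F' I mu. Min ((\<lambda>s. w s m) ` S) = Min ((\<lambda>s. w s m) ` T))"
proof
  have Sf: "finite S" "S \<noteq> {}" "S \<subseteq> elems F' J nu" using S unfolding finne_def by auto
  have Tf: "finite T" "T \<noteq> {}" "T \<subseteq> elems F' J nu" using T unfolding finne_def by auto
  assume eq: "pconv F' J nu S = pconv F' J nu T"
  have sub: "Min ((\<lambda>s. w s m) ` B) \<le> Min ((\<lambda>s. w s m) ` A)"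
    if A: "A \<in> finne F' J nu" and B: "B \<in> finne F' J nu" and e: "pconv F' J nu A = pconv F' J nu B"
      and m: "m \<in> elems F' I mu" for A B m
  proof -
    have Af: "finite A" "A \<noteq> {}" "A \<subseteq> elems F' J nu" using A unfolding finne_def by auto
    have Bf: "finite B" "B \<noteq> {}" using B unfolding finne_def by auto
    have "a \<in> pconv F' J nu A" if a: "a \<in> A" for a
    proof -
      have "Min ((\<lambda>s. w s m) ` A) \<le> w a m" if "m \<in> elems F' I mu" for m
        using Af a by (intro Min_le) auto
      then show ?thesis unfolding pconv_char[OF A] using a Af by auto
    qed
    then have "a \<in> pconv F' J nu B" if "a \<in> A" for a using e that by blast
    then have "Min ((\<lambda>s. w s m) ` B) \<le> w a m" if "a \<in> A" for a
      using that m unfolding pconv_char[OF B] by blast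
    then show ?thesis using Af by (intro Min.boundedI) auto
  qed
  show "\<forall>m\<in>elems F' I mu. Min ((\<lambda>s. w s m) ` S) = Min ((\<lambda>s. w s m) ` T)"
  proof
    fix m assume m: "m \<in> elems F' I mu"
    show "Min ((\<lambda>s. w s m) ` S) = Min ((\<lambda>s. w s m) ` T)"
      using sub[OF S T eq m] sub[OF T S eq[symmetric] m] by (rule antisym[rotated])
  qed
next
  assume eq: "\<forall>m\<in>elems F' I mu. Min ((\<lambda>s. w s m) ` S) = Min ((\<lambda>s. w s m) ` T)"
  show "pconv F' J nu S = pconv F' J nu T"
    unfolding pconv_char[OF S] pconv_char[OF T] using eq by auto
qed

lemma good_MinS: "S \<in> finne F' J nu \<Longrightarrow> good I mu (\<lambda>m. Min ((\<lambda>s. w s m) ` S))"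
  unfolding finne_def
  by (rule good_Min[OF polyI]) (auto intro: good_w NF_NR)

lemma fS_eq_iff:
  assumes S: "S \<in> finne F' J nu" and T: "T \<in> finne F' J nu"
  shows "fS S = fS T \<longleftrightarrow> pconv F' J nu S = pconv F' J nu T"
proof
  assume fe: "fS S = fS T"
  have "Min ((\<lambda>s. w s m) ` S) = Min ((\<lambda>s. w s m) ` T)" if m: "m \<in> elems UNIV I mu" for m
  proof -
    have "fS S m = fS T m" using fe by simp
    then show ?thesis unfolding fS_def using m by simp
  qed
  then have "\<forall>m\<in>elems UNIV I mu. Min ((\<lambda>s. w s m) ` S) = Min ((\<lambda>s. w s m) ` T)" by blast
  then show "pconv F' J nu S = pconv F' J nu T"
    unfolding pconv_eq_iff[OF S T] using MF_MR by blast
next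
  assume "pconv F' J nu S = pconv F' J nu T"
  then have e: "\<forall>m\<in>elems F' I mu. Min ((\<lambda>s. w s m) ` S) = Min ((\<lambda>s. w s m) ` T)"
    unfolding pconv_eq_iff[OF S T] .
  have "Min ((\<lambda>s. w s m) ` S) = Min ((\<lambda>s. w s m) ` T)" if m: "m \<in> elems UNIV I mu" for m
    by (rule extM[OF polyI sF' FF' good_MinS[OF S] good_MinS[OF T]]) (use e m in auto)
  then show "fS S = fS T" unfolding fS_def by (intro restrict_ext) auto
qed

end

context dualp
begin

lemma finneD: "S \<in> finne F' J nu \<Longrightarrow> finite S \<and> S \<noteq> {} \<and> S \<subseteq> elems F' J nu"
  unfolding finne_def by blast

lemma K2:
  assumes s: "s \<in> elems F' J nu" and t: "t \<in> elems F' J nu" and m: "m \<in> elems UNIV I mu"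
  shows "Min ((\<lambda>\<alpha>. w (padd J nu \<alpha> s t) m) ` J) = w s m + w t m"
proof (rule extM[OF polyI sF' FF' _ _ _ m])
  have Jne: "J \<noteq> {}" using I_ne[OF polyJ] .
  show "good I mu (\<lambda>m. Min ((\<lambda>\<alpha>. w (padd J nu \<alpha> s t) m) ` J))"
    by (rule good_Min[OF polyI finJ Jne]) (rule good_w, rule padd_elems[OF polyJ])
  show "good I mu (\<lambda>m. w s m + w t m)"
    by (rule good_add[OF polyI good_w[OF NF_NR[OF s]] good_w[OF NF_NR[OF t]]])
  fix m assume mF: "m \<in> elems F' I mu"
  have "v m s + v m t = Min ((\<lambda>\<alpha>. v m (padd J nu \<alpha> s t)) ` J)"
    by (rule Sp_D(3)[OF v_Sp[OF MF_MR[OF mF]] NF_NR[OF s] NF_NR[OF t]])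
  also have "(\<lambda>\<alpha>. v m (padd J nu \<alpha> s t)) ` J = (\<lambda>\<alpha>. w (padd J nu \<alpha> s t) m) ` J"
  proof (rule image_cong[OF refl])
    fix \<alpha> assume a: "\<alpha> \<in> J"
    show "v m (padd J nu \<alpha> s t) = w (padd J nu \<alpha> s t) m"
      by (rule vw[OF mF padd_elemsF[OF polyJ sF' FF' a s t]])
  qed
  finally show "Min ((\<lambda>\<alpha>. w (padd J nu \<alpha> s t) m) ` J) = w s m + w t m"
    using vw[OF mF s] vw[OF mF t] by simp
qed

lemma K3:
  assumes s: "s \<in> elems F' J nu" and c: "c \<in> F" "0 \<le> c" and m: "m \<in> elems UNIV I mu"
  shows "w (psmul J nu c s) m = c * w s m"
proof (rule extM[OF polyI sF' FF' _ _ _ m])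
  have cF: "c \<in> F'" using c FF' by blast
  have ps: "psmul J nu c s \<in> elems F' J nu" by (rule psmul_elemsF[OF polyJ sF' FF' cF s])
  show "good I mu (w (psmul J nu c s))" by (rule good_w[OF NF_NR[OF ps]])
  show "good I mu (\<lambda>m. c * w s m)" by (rule good_cmult[OF polyI good_w[OF NF_NR[OF s]]])
  fix m assume mF: "m \<in> elems F' I mu"
  have "v m (psmul J nu c s) = c * v m s"
    by (rule Sp_D(4)[OF v_Sp[OF MF_MR[OF mF]] _ c(2) NF_NR[OF s]]) simp
  then show "w (psmul J nu c s) m = c * w s m"
    using vw[OF mF s] vw[OF mF ps] by simp
qed

lemma fS_single: "n \<in> elems UNIV J nu \<Longrightarrow> fS {n} = w n"
proof (rule ext)
  fix m assume n: "n \<in> elems UNIV J nu"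
  show "fS {n} m = w n m"
  proof (cases "m \<in> elems UNIV I mu")
    case True then show ?thesis unfolding fS_def by simp
  next
    case False
    have "fS {n} m = undefined" unfolding fS_def using False by simp
    moreover have "w n m = undefined" using w_ext[OF n] False by (rule extensional_arb)
    ultimately show ?thesis by simp
  qed
qed

lemma fS_Un:
  assumes A: "A \<in> finne F' J nu" and B: "B \<in> finne F' J nu"
  shows "fS (A \<union> B) = restrict (\<lambda>m. min (fS A m) (fS B m)) (elems UNIV I mu)"
  unfolding fS_def using finneD[OF A] finneD[OF B]
  by (intro restrict_ext) (simp add: image_Un Min.union)

definition Pset where
  "Pset A B = {padd J nu \<alpha> s t | \<alpha> s t. \<alpha> \<in> J \<and> s \<in> A \<and> t \<in> B}"

lemma Pset_finne:
  assumes A: "A \<in> finne F' J nu" and B: "B \<in> finne F' J nu"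
  shows "Pset A B \<in> finne F' J nu"
proof -
  have Af: "finite A" "A \<noteq> {}" "A \<subseteq> elems F' J nu" and Bf: "finite B" "B \<noteq> {}" "B \<subseteq> elems F' J nu"
    using finneD[OF A] finneD[OF B] by auto
  have Jne: "J \<noteq> {}" using I_ne[OF polyJ] .
  have eq: "Pset A B = (\<lambda>(\<alpha>, s, t). padd J nu \<alpha> s t) ` (J \<times> A \<times> B)"
    unfolding Pset_def by force
  have "finite (Pset A B)" unfolding eq using finJ Af Bf by simp
  moreover have "Pset A B \<noteq> {}" unfolding eq using Jne Af Bf by simp
  moreover have "Pset A B \<subseteq> elems F' J nu"
    unfolding Pset_def using Af Bf padd_elemsF[OF polyJ sF' FF'] by blast
  ultimately show ?thesis unfolding finne_def by blast
qed

lemma fS_Pset: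
  assumes A: "A \<in> finne F' J nu" and B: "B \<in> finne F' J nu"
  shows "fS (Pset A B) = restrict (\<lambda>m. fS A m + fS B m) (elems UNIV I mu)"
  unfolding fS_def
proof (rule restrict_ext)
  fix m assume m: "m \<in> elems UNIV I mu"
  have Af: "finite A" "A \<noteq> {}" "A \<subseteq> elems F' J nu" and Bf: "finite B" "B \<noteq> {}" "B \<subseteq> elems F' J nu"
    using finneD[OF A] finneD[OF B] by auto
  have Pf: "finite (Pset A B)" "Pset A B \<noteq> {}" using finneD[OF Pset_finne[OF A B]] by auto
  have Jne: "J \<noteq> {}" using I_ne[OF polyJ] .
  let ?a = "Min ((\<lambda>s. w s m) ` A)" and ?b = "Min ((\<lambda>s. w s m) ` B)"
  have "?a \<in> (\<lambda>s. w s m) ` A" using Af by (intro Min_in) auto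
  then obtain s0 where s0: "s0 \<in> A" "?a = w s0 m" by blast
  have "?b \<in> (\<lambda>s. w s m) ` B" using Bf by (intro Min_in) auto
  then obtain t0 where t0: "t0 \<in> B" "?b = w t0 m" by blast
  have s0F: "s0 \<in> elems F' J nu" and t0F: "t0 \<in> elems F' J nu" using s0 t0 Af Bf by auto
  have "Min ((\<lambda>\<alpha>. w (padd J nu \<alpha> s0 t0) m) ` J) \<in> (\<lambda>\<alpha>. w (padd J nu \<alpha> s0 t0) m) ` J"
    using finJ Jne by (intro Min_in) auto
  then obtain a0 where a0: "a0 \<in> J" "Min ((\<lambda>\<alpha>. w (padd J nu \<alpha> s0 t0) m) ` J) = w (padd J nu a0 s0 t0) m"
    by blast
  have le1: "Min ((\<lambda>n. w n m) ` Pset A B) \<le> ?a + ?b"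
  proof -
    have "padd J nu a0 s0 t0 \<in> Pset A B" unfolding Pset_def using a0 s0 t0 by blast
    then have "Min ((\<lambda>n. w n m) ` Pset A B) \<le> w (padd J nu a0 s0 t0) m" using Pf by (intro Min_le) auto
    also have "\<dots> = ?a + ?b" using a0(2) K2[OF s0F t0F m] s0 t0 by simp
    finally show ?thesis .
  qed
  have le2: "?a + ?b \<le> Min ((\<lambda>n. w n m) ` Pset A B)"
  proof (rule Min.boundedI)
    show "finite ((\<lambda>n. w n m) ` Pset A B)" "(\<lambda>n. w n m) ` Pset A B \<noteq> {}" using Pf by auto
    fix y assume "y \<in> (\<lambda>n. w n m) ` Pset A B"
    then obtain \<alpha> s t where y: "y = w (padd J nu \<alpha> s t) m" and \<alpha>: "\<alpha> \<in> J" and s: "s \<in> A" and t: "t \<in> B"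
      unfolding Pset_def by blast
    have sF: "s \<in> elems F' J nu" and tF: "t \<in> elems F' J nu" using s t Af Bf by auto
    have "?a \<le> w s m" using Af s by (intro Min_le) auto
    moreover have "?b \<le> w t m" using Bf t by (intro Min_le) auto
    moreover have "w s m + w t m = Min ((\<lambda>\<alpha>. w (padd J nu \<alpha> s t) m) ` J)" using K2[OF sF tF m] by simp
    moreover have "Min ((\<lambda>\<alpha>. w (padd J nu \<alpha> s t) m) ` J) \<le> y" unfolding y using finJ \<alpha> by (intro Min_le) auto
    ultimately show "?a + ?b \<le> y" by linarith
  qed
  show "Min ((\<lambda>n. w n m) ` Pset A B) = restrict (\<lambda>m. Min ((\<lambda>n. w n m) ` A)) (elems UNIV I mu) m +
          restrict (\<lambda>m. Min ((\<lambda>n. w n m) ` B)) (elems UNIV I mu) m"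
    using le1 le2 m by simp
qed

lemma psmul_finne:
  assumes A: "A \<in> finne F' J nu" and c: "c \<in> F"
  shows "psmul J nu c ` A \<in> finne F' J nu"
proof -
  have cF: "c \<in> F'" using c FF' by blast
  show ?thesis using finneD[OF A] psmul_elemsF[OF polyJ sF' FF' cF] unfolding finne_def by blast
qed

lemma fS_psmul:
  assumes A: "A \<in> finne F' J nu" and c: "c \<in> F" "0 \<le> c"
  shows "fS (psmul J nu c ` A) = restrict (\<lambda>m. c * fS A m) (elems UNIV I mu)"
  unfolding fS_def
proof (rule restrict_ext)
  fix m assume m: "m \<in> elems UNIV I mu"
  have Af: "finite A" "A \<noteq> {}" "A \<subseteq> elems F' J nu" using finneD[OF A] by auto
  have "(\<lambda>n. w n m) ` psmul J nu c ` A = (\<lambda>s. c * w s m) ` A"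
    unfolding image_image using K3[OF _ c m] Af by (intro image_cong) auto
  also have "\<dots> = (\<lambda>x. c * x) ` ((\<lambda>s. w s m) ` A)" by (simp add: image_image)
  finally have "Min ((\<lambda>n. w n m) ` psmul J nu c ` A) = Min ((\<lambda>x. c * x) ` ((\<lambda>s. w s m) ` A))" by simp
  also have "\<dots> = c * Min ((\<lambda>s. w s m) ` A)"
    by (rule mono_Min_commute[symmetric]) (use c Af in \<open>auto intro: monoI mult_left_mono\<close>)
  finally show "Min ((\<lambda>n. w n m) ` psmul J nu c ` A) = c * restrict (\<lambda>m. Min ((\<lambda>n. w n m) ` A)) (elems UNIV I mu) m"
    using m by simp
qed

end

context dualp
begin

lemma cls_char: "S \<in> finne F' J nu \<Longrightarrow>
    cls F' J nu S = {T \<in> finne F' J nu. pconv F' J nu T = pconv F' J nu S}"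
  unfolding cls_def pcrel_def by auto

lemma rep_cls: "S \<in> finne F' J nu \<Longrightarrow>
    rep (cls F' J nu S) \<in> finne F' J nu \<and> pconv F' J nu (rep (cls F' J nu S)) = pconv F' J nu S"
proof -
  assume S: "S \<in> finne F' J nu"
  have "S \<in> cls F' J nu S" using S unfolding cls_char[OF S] by blast
  then have "rep (cls F' J nu S) \<in> cls F' J nu S" unfolding rep_def by (rule someI)
  then show ?thesis unfolding cls_char[OF S] by blast
qed

lemma cls_quot: "S \<in> finne F' J nu \<Longrightarrow> cls F' J nu S \<in> finne F' J nu // pcrel F' J nu"
  unfolding quotient_def cls_def by blast

lemma quotE: "X \<in> finne F' J nu // pcrel F' J nu \<Longrightarrow> \<exists>S\<in>finne F' J nu. X = cls F' J nu S"
  unfolding quotient_def cls_def by blast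

lemma cls_eq: "S \<in> finne F' J nu \<Longrightarrow> T \<in> finne F' J nu \<Longrightarrow>
    pconv F' J nu S = pconv F' J nu T \<Longrightarrow> cls F' J nu S = cls F' J nu T"
  by (simp add: cls_char)

lemma rep_quot: "X \<in> finne F' J nu // pcrel F' J nu \<Longrightarrow>
    rep X \<in> finne F' J nu \<and> cls F' J nu (rep X) = X"
proof -
  assume X: "X \<in> finne F' J nu // pcrel F' J nu"
  then obtain S where S: "S \<in> finne F' J nu" and XS: "X = cls F' J nu S" using quotE by blast
  have r: "rep X \<in> finne F' J nu" "pconv F' J nu (rep X) = pconv F' J nu S"
    using rep_cls[OF S] XS by auto
  show ?thesis using r cls_eq[OF r(1) S r(2)] XS by simp
qed

definition Phi :: "('j \<Rightarrow> real^'s) set set option \<Rightarrow> (('i \<Rightarrow> real^'r) \<Rightarrow> real) option" where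
  "Phi x = map_option (\<lambda>X. fS (rep X)) x"

lemma Phi_None: "Phi None = None" unfolding Phi_def by simp

lemma Phi_cls: "S \<in> finne F' J nu \<Longrightarrow> Phi (Some (cls F' J nu S)) = Some (fS S)"
proof -
  assume S: "S \<in> finne F' J nu"
  have "fS (rep (cls F' J nu S)) = fS S"
    using rep_cls[OF S] fS_eq_iff[OF _ S] by blast
  then show ?thesis unfolding Phi_def by simp
qed

lemma scarA: "scar (canon_sa F' J nu) = insert None (Some ` (finne F' J nu // pcrel F' J nu))"
  by (simp add: canon_sa_def)

lemma splA: "spl (canon_sa F' J nu) (Some X) (Some Y) = Some (cls F' J nu (rep X \<union> rep Y))"
  "spl (canon_sa F' J nu) None y = y" "spl (canon_sa F' J nu) x None = x"
  by (simp_all add: canon_sa_def split: option.split)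

lemma stmA: "stm (canon_sa F' J nu) (Some X) (Some Y) = Some (cls F' J nu (Pset (rep X) (rep Y)))"
  "stm (canon_sa F' J nu) None y = None" "stm (canon_sa F' J nu) x None = None"
  by (simp_all add: canon_sa_def Pset_def split: option.split)

lemma sscA: "ssc (canon_sa F' J nu) c (Some X) = Some (cls F' J nu (psmul J nu c ` rep X))"
  "ssc (canon_sa F' J nu) c None = None"
  by (simp_all add: canon_sa_def)

lemma opsB: "spl (point_sa F F' I mu) = ppl (elems UNIV I mu)"
  "stm (point_sa F F' I mu) = ptm (elems UNIV I mu)"
  "ssc (point_sa F F' I mu) = psc (elems UNIV I mu)"
  "sinf (point_sa F F' I mu) = None"
  by (simp_all add: point_sa_def)

lemma scarB: "scar (point_sa F F' I mu) = \<Inter>{X. None \<in> X \<and>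
                  (\<forall>p\<in>Sp F' I mu. Some (ext_pt F' I mu p) \<in> X) \<and>
                  (\<forall>x\<in>X. \<forall>y\<in>X. ppl (elems UNIV I mu) x y \<in> X \<and> ptm (elems UNIV I mu) x y \<in> X) \<and>
                  (\<forall>c\<in>F. 0 \<le> c \<longrightarrow> (\<forall>x\<in>X. psc (elems UNIV I mu) c x \<in> X))}"
  by (simp add: point_sa_def)

lemma scarA_cases:
  assumes "x \<in> scar (canon_sa F' J nu)"
  obtains "x = None" | X where "X \<in> finne F' J nu // pcrel F' J nu" "x = Some X"
  using assms unfolding scarA by blast

lemma Phi_Some: "Phi (Some X) = Some (fS (rep X))" unfolding Phi_def by simp

lemma hom_spl:
  assumes x: "x \<in> scar (canon_sa F' J nu)" and y: "y \<in> scar (canon_sa F' J nu)"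
  shows "spl (canon_sa F' J nu) x y \<in> scar (canon_sa F' J nu) \<and>
    Phi (spl (canon_sa F' J nu) x y) = spl (point_sa F F' I mu) (Phi x) (Phi y)"
proof (cases rule: scarA_cases[OF x])
  case 1 then show ?thesis using y by (simp add: splA Phi_None opsB ppl_def)
next
  case (2 X)
  show ?thesis
  proof (cases rule: scarA_cases[OF y])
    case 1 then show ?thesis using x 2 by (simp add: splA Phi_None opsB ppl_def split: option.split)
  next
    case (2 Y)
    note X = rep_quot[OF \<open>X \<in> _\<close>] and Y = rep_quot[OF \<open>Y \<in> _\<close>]
    have U: "rep X \<union> rep Y \<in> finne F' J nu" using X Y unfolding finne_def by auto
    have "Phi (spl (canon_sa F' J nu) x y) = Some (fS (rep X \<union> rep Y))"
      using \<open>x = Some X\<close> 2 by (simp add: splA Phi_cls[OF U])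
    also have "\<dots> = spl (point_sa F F' I mu) (Phi x) (Phi y)"
      using \<open>x = Some X\<close> 2 by (simp add: opsB ppl_def Phi_Some fS_Un[OF conjunct1[OF X] conjunct1[OF Y]])
    finally show ?thesis using \<open>x = Some X\<close> 2 cls_quot[OF U] by (simp add: splA scarA)
  qed
qed

lemma hom_stm:
  assumes x: "x \<in> scar (canon_sa F' J nu)" and y: "y \<in> scar (canon_sa F' J nu)"
  shows "stm (canon_sa F' J nu) x y \<in> scar (canon_sa F' J nu) \<and>
    Phi (stm (canon_sa F' J nu) x y) = stm (point_sa F F' I mu) (Phi x) (Phi y)"
proof (cases rule: scarA_cases[OF x])
  case 1 then show ?thesis using y by (simp add: stmA Phi_None opsB ptm_def scarA)
next
  case (2 X)
  show ?thesis
  proof (cases rule: scarA_cases[OF y])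
    case 1 then show ?thesis using x 2 by (simp add: stmA Phi_None opsB ptm_def scarA split: option.split)
  next
    case (2 Y)
    note X = rep_quot[OF \<open>X \<in> _\<close>] and Y = rep_quot[OF \<open>Y \<in> _\<close>]
    have U: "Pset (rep X) (rep Y) \<in> finne F' J nu" by (rule Pset_finne[OF conjunct1[OF X] conjunct1[OF Y]])
    have "Phi (stm (canon_sa F' J nu) x y) = Some (fS (Pset (rep X) (rep Y)))"
      using \<open>x = Some X\<close> 2 by (simp add: stmA Phi_cls[OF U])
    also have "\<dots> = stm (point_sa F F' I mu) (Phi x) (Phi y)"
      using \<open>x = Some X\<close> 2 by (simp add: opsB ptm_def Phi_Some fS_Pset[OF conjunct1[OF X] conjunct1[OF Y]])
    finally show ?thesis using \<open>x = Some X\<close> 2 cls_quot[OF U] by (simp add: stmA scarA)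
  qed
qed

lemma hom_ssc:
  assumes x: "x \<in> scar (canon_sa F' J nu)" and c: "c \<in> F" "0 \<le> c"
  shows "ssc (canon_sa F' J nu) c x \<in> scar (canon_sa F' J nu) \<and>
    Phi (ssc (canon_sa F' J nu) c x) = ssc (point_sa F F' I mu) c (Phi x)"
proof (cases rule: scarA_cases[OF x])
  case 1 then show ?thesis by (simp add: sscA Phi_None opsB psc_def scarA)
next
  case (2 X)
  note X = rep_quot[OF \<open>X \<in> _\<close>]
  have U: "psmul J nu c ` rep X \<in> finne F' J nu" by (rule psmul_finne[OF conjunct1[OF X] c(1)])
  have "Phi (ssc (canon_sa F' J nu) c x) = Some (fS (psmul J nu c ` rep X))"
    using 2 by (simp add: sscA Phi_cls[OF U])
  also have "\<dots> = ssc (point_sa F F' I mu) c (Phi x)"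
    using 2 by (simp add: opsB psc_def Phi_Some fS_psmul[OF conjunct1[OF X] c])
  finally show ?thesis using 2 cls_quot[OF U] by (simp add: sscA scarA)
qed

lemma ext_pt_w:
  assumes n: "n \<in> elems F' J nu"
  shows "ext_pt F' I mu (restrict (w n) (elems F' I mu)) = w n"
  unfolding ext_pt_def
proof (rule the_equality)
  show "w n \<in> Sp UNIV I mu \<and> (\<forall>m\<in>elems F' I mu. w n m = restrict (w n) (elems F' I mu) m)"
    using w_Sp[OF NF_NR[OF n]] by simp
  fix q assume q: "q \<in> Sp UNIV I mu \<and> (\<forall>m\<in>elems F' I mu. q m = restrict (w n) (elems F' I mu) m)"
  show "q = w n"
  proof (rule ext)
    fix m show "q m = w n m"
    proof (cases "m \<in> elems UNIV I mu")
      case True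
      show ?thesis
      proof (rule extM[OF polyI sF' FF' good_Sp[OF polyI finI] good_w[OF NF_NR[OF n]] _ True])
        show "q \<in> Sp UNIV I mu" using q by blast
        fix m assume "m \<in> elems F' I mu" then show "q m = w n m" using q by simp
      qed
    next
      case False
      have qS: "q \<in> Sp UNIV I mu" using q by blast
      have "q m = undefined" using Sp_D(1)[OF qS] False by (rule extensional_arb)
      moreover have "w n m = undefined" using w_ext[OF NF_NR[OF n]] False by (rule extensional_arb)
      ultimately show ?thesis by simp
    qed
  qed
qed

lemma singleton_finne: "n \<in> elems F' J nu \<Longrightarrow> {n} \<in> finne F' J nu"
  unfolding finne_def by auto

lemma fS_in_closed:
  assumes E: "\<And>p. p \<in> Sp F' I mu \<Longrightarrow> Some (ext_pt F' I mu p) \<in> Xs"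
    and P: "\<And>a b. a \<in> Xs \<Longrightarrow> b \<in> Xs \<Longrightarrow> ppl (elems UNIV I mu) a b \<in> Xs"
    and S: "S \<in> finne F' J nu"
  shows "Some (fS S) \<in> Xs"
proof -
  have fin: "finite S" "S \<noteq> {}" "S \<subseteq> elems F' J nu" using finneD[OF S] by auto
  have single: "Some (fS {n}) \<in> Xs" if n: "n \<in> elems F' J nu" for n
  proof -
    have "Some (ext_pt F' I mu (restrict (w n) (elems F' I mu))) \<in> Xs" by (rule E[OF wF_Sp[OF n]])
    moreover have "ext_pt F' I mu (restrict (w n) (elems F' I mu)) = fS {n}"
      unfolding ext_pt_w[OF n] fS_single[OF NF_NR[OF n]] ..
    ultimately show ?thesis by simp
  qed
  from fin show ?thesis
  proof (induction S rule: finite_ne_induct)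
    case (singleton n)
    then show ?case using single by simp
  next
    case (insert n S)
    have n: "n \<in> elems F' J nu" and SS: "S \<subseteq> elems F' J nu" using insert.prems by auto
    have Sf: "S \<in> finne F' J nu" unfolding finne_def using insert.hyps SS by blast
    have IH: "Some (fS S) \<in> Xs" using insert.IH SS .
    have "ppl (elems UNIV I mu) (Some (fS {n})) (Some (fS S)) \<in> Xs" by (rule P[OF single[OF n] IH])
    moreover have "ppl (elems UNIV I mu) (Some (fS {n})) (Some (fS S)) = Some (fS ({n} \<union> S))"
      unfolding fS_Un[OF singleton_finne[OF n] Sf] ppl_def by simp
    moreover have "{n} \<union> S = insert n S" by simp
    ultimately show ?case by simp
  qed
qed

lemma Phi_image_sub:
  "Phi ` scar (canon_sa F' J nu) \<subseteq> scar (point_sa F F' I mu)"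
  unfolding scarB
proof (intro subsetI InterI)
  fix z Xs assume z: "z \<in> Phi ` scar (canon_sa F' J nu)" and Xs: "Xs \<in> {X. None \<in> X \<and>
                  (\<forall>p\<in>Sp F' I mu. Some (ext_pt F' I mu p) \<in> X) \<and>
                  (\<forall>x\<in>X. \<forall>y\<in>X. ppl (elems UNIV I mu) x y \<in> X \<and> ptm (elems UNIV I mu) x y \<in> X) \<and>
                  (\<forall>c\<in>F. 0 \<le> c \<longrightarrow> (\<forall>x\<in>X. psc (elems UNIV I mu) c x \<in> X))}"
  from z obtain x where x: "x \<in> scar (canon_sa F' J nu)" and zx: "z = Phi x" by blast
  from Xs have H: "None \<in> Xs \<and>
                  (\<forall>p\<in>Sp F' I mu. Some (ext_pt F' I mu p) \<in> Xs) \<and>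
                  (\<forall>x\<in>Xs. \<forall>y\<in>Xs. ppl (elems UNIV I mu) x y \<in> Xs \<and> ptm (elems UNIV I mu) x y \<in> Xs) \<and>
                  (\<forall>c\<in>F. 0 \<le> c \<longrightarrow> (\<forall>x\<in>Xs. psc (elems UNIV I mu) c x \<in> Xs))" by (rule CollectD)
  have N: "None \<in> Xs" using H by (rule conjunct1)
  have E: "Some (ext_pt F' I mu p) \<in> Xs" if "p \<in> Sp F' I mu" for p
    using H[THEN conjunct2, THEN conjunct1] that by (rule bspec)
  have P: "ppl (elems UNIV I mu) a b \<in> Xs" if "a \<in> Xs" "b \<in> Xs" for a b
    using H[THEN conjunct2, THEN conjunct2, THEN conjunct1, rule_format, OF that] by (rule conjunct1)
  show "z \<in> Xs"
  proof (cases rule: scarA_cases[OF x])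
    case 1 then show ?thesis using N Phi_None zx by simp
  next
    case (2 X)
    have "Some (fS (rep X)) \<in> Xs"
      by (rule fS_in_closed[OF E P conjunct1[OF rep_quot[OF \<open>X \<in> _\<close>]]])
    then show ?thesis using zx 2 Phi_Some by simp
  qed
qed

lemma Phi_image_sup:
  "scar (point_sa F F' I mu) \<subseteq> Phi ` scar (canon_sa F' J nu)"
proof -
  let ?Xs = "Phi ` scar (canon_sa F' J nu)"
  have c1: "None \<in> ?Xs" using Phi_None by (force simp: scarA)
  have c2: "Some (ext_pt F' I mu p) \<in> ?Xs" if p: "p \<in> Sp F' I mu" for p
  proof -
    obtain n where n: "n \<in> elems F' J nu" and pn: "p = restrict (w n) (elems F' I mu)" using w_surj[OF p] by blast
    have "Some (ext_pt F' I mu p) = Phi (Some (cls F' J nu {n}))"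
      using pn ext_pt_w[OF n] Phi_cls[OF singleton_finne[OF n]] fS_single[OF NF_NR[OF n]] by simp
    moreover have "Some (cls F' J nu {n}) \<in> scar (canon_sa F' J nu)"
      using cls_quot[OF singleton_finne[OF n]] by (simp add: scarA)
    ultimately show ?thesis by blast
  qed
  have c3: "ppl (elems UNIV I mu) a b \<in> ?Xs \<and> ptm (elems UNIV I mu) a b \<in> ?Xs" if ab: "a \<in> ?Xs" "b \<in> ?Xs" for a b
  proof -
    obtain x where x: "x \<in> scar (canon_sa F' J nu)" "a = Phi x" using ab(1) by blast
    obtain y where y: "y \<in> scar (canon_sa F' J nu)" "b = Phi y" using ab(2) by blast
    note h1 = hom_spl[OF x(1) y(1)] and h2 = hom_stm[OF x(1) y(1)]
    have "ppl (elems UNIV I mu) a b = Phi (spl (canon_sa F' J nu) x y)" using h1 x(2) y(2) by (simp add: opsB)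
    then have 1: "ppl (elems UNIV I mu) a b \<in> ?Xs" by (rule image_eqI[OF _ conjunct1[OF h1]])
    have "ptm (elems UNIV I mu) a b = Phi (stm (canon_sa F' J nu) x y)" using h2 x(2) y(2) by (simp add: opsB)
    then have 2: "ptm (elems UNIV I mu) a b \<in> ?Xs" by (rule image_eqI[OF _ conjunct1[OF h2]])
    show ?thesis using 1 2 by blast
  qed
  have c4: "psc (elems UNIV I mu) c a \<in> ?Xs" if ca: "c \<in> F" "0 \<le> c" "a \<in> ?Xs" for c a
  proof -
    obtain x where x: "x \<in> scar (canon_sa F' J nu)" "a = Phi x" using ca(3) by blast
    note h = hom_ssc[OF x(1) ca(1,2)]
    have "psc (elems UNIV I mu) c a = Phi (ssc (canon_sa F' J nu) c x)" using h x(2) by (simp add: opsB)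
    then show ?thesis by (rule image_eqI[OF _ conjunct1[OF h]])
  qed
  have mem: "?Xs \<in> {X. None \<in> X \<and>
                  (\<forall>p\<in>Sp F' I mu. Some (ext_pt F' I mu p) \<in> X) \<and>
                  (\<forall>x\<in>X. \<forall>y\<in>X. ppl (elems UNIV I mu) x y \<in> X \<and> ptm (elems UNIV I mu) x y \<in> X) \<and>
                  (\<forall>c\<in>F. 0 \<le> c \<longrightarrow> (\<forall>x\<in>X. psc (elems UNIV I mu) c x \<in> X))}"
    unfolding mem_Collect_eq
  proof (intro conjI ballI allI impI)
    show "None \<in> ?Xs" by (rule c1)
    show "Some (ext_pt F' I mu p) \<in> ?Xs" if "p \<in> Sp F' I mu" for p using that by (rule c2)
    show "ppl (elems UNIV I mu) a b \<in> ?Xs" if "a \<in> ?Xs" "b \<in> ?Xs" for a b using c3[OF that] by (rule conjunct1)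
    show "ptm (elems UNIV I mu) a b \<in> ?Xs" if "a \<in> ?Xs" "b \<in> ?Xs" for a b using c3[OF that] by (rule conjunct2)
    show "psc (elems UNIV I mu) c a \<in> ?Xs" if "c \<in> F" "0 \<le> c" "a \<in> ?Xs" for c a using that by (rule c4)
  qed
  have "scar (point_sa F F' I mu) = \<Inter>{X. None \<in> X \<and>
                  (\<forall>p\<in>Sp F' I mu. Some (ext_pt F' I mu p) \<in> X) \<and>
                  (\<forall>x\<in>X. \<forall>y\<in>X. ppl (elems UNIV I mu) x y \<in> X \<and> ptm (elems UNIV I mu) x y \<in> X) \<and>
                  (\<forall>c\<in>F. 0 \<le> c \<longrightarrow> (\<forall>x\<in>X. psc (elems UNIV I mu) c x \<in> X))}"
    by (simp add: point_sa_def)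
  then show ?thesis using Inter_lower[OF mem] by simp
qed

lemma Phi_inj: "inj_on Phi (scar (canon_sa F' J nu))"
proof (rule inj_onI)
  fix x y assume x: "x \<in> scar (canon_sa F' J nu)" and y: "y \<in> scar (canon_sa F' J nu)" and e: "Phi x = Phi y"
  show "x = y"
  proof (cases rule: scarA_cases[OF x])
    case 1 then show ?thesis using e by (cases y) (simp_all add: Phi_def)
  next
    case (2 X)
    show ?thesis
    proof (cases rule: scarA_cases[OF y])
      case 1 then show ?thesis using e \<open>x = Some X\<close> by (simp add: Phi_def)
    next
      case (2 Y)
      note X = rep_quot[OF \<open>X \<in> _\<close>] and Y = rep_quot[OF \<open>Y \<in> _\<close>]
      have "fS (rep X) = fS (rep Y)" using e \<open>x = Some X\<close> 2 by (simp add: Phi_def)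
      then have "pconv F' J nu (rep X) = pconv F' J nu (rep Y)"
        using fS_eq_iff[OF conjunct1[OF X] conjunct1[OF Y]] by blast
      then have "cls F' J nu (rep X) = cls F' J nu (rep Y)"
        by (rule cls_eq[OF conjunct1[OF X] conjunct1[OF Y]])
      then show ?thesis using X Y \<open>x = Some X\<close> 2 by simp
    qed
  qed
qed

lemma half:
  "\<exists>\<Phi>. sa_iso F \<Phi> (canon_sa F' J nu) (point_sa F F' I mu) \<and> \<Phi> None = None \<and>
     (\<forall>S\<in>finne F' J nu. \<Phi> (Some (cls F' J nu S)) =
        Some (restrict (\<lambda>m. Min ((\<lambda>n. w n m) ` S)) (elems UNIV I mu)))"
proof (intro exI conjI)
  show "sa_iso F Phi (canon_sa F' J nu) (point_sa F F' I mu)"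
    unfolding sa_iso_def
  proof (intro conjI ballI allI impI)
    show "bij_betw Phi (scar (canon_sa F' J nu)) (scar (point_sa F F' I mu))"
      unfolding bij_betw_def using Phi_inj Phi_image_sub Phi_image_sup by (intro conjI equalityI)
    fix x y assume xy: "x \<in> scar (canon_sa F' J nu)" "y \<in> scar (canon_sa F' J nu)"
    show "Phi (spl (canon_sa F' J nu) x y) = spl (point_sa F F' I mu) (Phi x) (Phi y)"
      using hom_spl[OF xy] by (rule conjunct2)
    show "Phi (stm (canon_sa F' J nu) x y) = stm (point_sa F F' I mu) (Phi x) (Phi y)"
      using hom_stm[OF xy] by (rule conjunct2)
  next
    fix c x assume cx: "c \<in> F" "0 \<le> c" "x \<in> scar (canon_sa F' J nu)"
    show "Phi (ssc (canon_sa F' J nu) c x) = ssc (point_sa F F' I mu) c (Phi x)"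
      using hom_ssc[OF cx(3) cx(1,2)] by (rule conjunct2)
  next
    show "Phi (sinf (canon_sa F' J nu)) = sinf (point_sa F F' I mu)"
      by (simp add: canon_sa_def opsB Phi_None)
  qed
  show "Phi None = None" by (rule Phi_None)
  show "\<forall>S\<in>finne F' J nu. Phi (Some (cls F' J nu S)) =
        Some (restrict (\<lambda>m. Min ((\<lambda>n. w n m) ` S)) (elems UNIV I mu))"
  proof
    fix S assume "S \<in> finne F' J nu"
    from Phi_cls[OF this] show "Phi (Some (cls F' J nu S)) =
        Some (restrict (\<lambda>m. Min ((\<lambda>n. w n m) ` S)) (elems UNIV I mu))" unfolding fS_def .
  qed
qed

end

lemma sd_swap:
  assumes "strict_dual_pair F F' I mu J nu v w"
  shows "strict_dual_pair F F' J nu I mu w v"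
proof -
  have H: "(\<forall>m\<in>elems UNIV I mu. v m \<in> Sp UNIV J nu) \<and>
     (\<forall>n\<in>elems UNIV J nu. w n \<in> Sp UNIV I mu) \<and>
     (\<forall>m\<in>elems F' I mu. restrict (v m) (elems F' J nu) \<in> Sp F' J nu) \<and>
     (\<forall>n\<in>elems F' J nu. restrict (w n) (elems F' I mu) \<in> Sp F' I mu) \<and>
     (\<forall>m\<in>elems F' I mu. \<forall>n\<in>elems F' J nu. v m n = w n m) \<and>
     bij_betw (\<lambda>m. restrict (v m) (elems F' J nu)) (elems F' I mu) (Sp F' J nu) \<and>
     bij_betw (\<lambda>n. restrict (w n) (elems F' I mu)) (elems F' J nu) (Sp F' I mu) \<and>
     (\<lambda>\<gamma>. {m \<in> elems UNIV I mu. v m \<in> Sp_chart J nu \<gamma>}) ` J = max_cones F I mu \<and>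
     (\<lambda>\<gamma>. {n \<in> elems UNIV J nu. w n \<in> Sp_chart I mu \<gamma>}) ` I = max_cones F J nu"
    using assms unfolding strict_dual_pair_def .
  have vw: "\<forall>n\<in>elems F' J nu. \<forall>m\<in>elems F' I mu. w n m = v m n"
  proof (intro ballI)
    fix n m assume n: "n \<in> elems F' J nu" and m: "m \<in> elems F' I mu"
    have "\<forall>m\<in>elems F' I mu. \<forall>n\<in>elems F' J nu. v m n = w n m" using H by (elim conjE)
    from this[rule_format, OF m n] show "w n m = v m n" by (rule sym)
  qed
  show ?thesis unfolding strict_dual_pair_def using H vw by (elim conjE) (intro conjI)
qed

theorem mainTheorem8:
  fixes F F' :: "real set"
    and I :: "'i set" and mu :: "'i \<Rightarrow> 'i \<Rightarrow> real^'r \<Rightarrow> real^'r"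
    and J :: "'j set" and nu :: "'j \<Rightarrow> 'j \<Rightarrow> real^'s \<Rightarrow> real^'s"
    and v :: "('i \<Rightarrow> real^'r) \<Rightarrow> ('j \<Rightarrow> real^'s) \<Rightarrow> real"
    and w :: "('j \<Rightarrow> real^'s) \<Rightarrow> ('i \<Rightarrow> real^'r) \<Rightarrow> real"
  assumes "subring_R F" and "subring_R F'" and "F \<subseteq> F'"
    and "finite_polyptych F I mu" and "finite_polyptych F J nu"
    and "strict_dual_pair F F' I mu J nu v w"
  shows "(\<exists>\<Phi>. sa_iso F \<Phi> (canon_sa F' J nu) (point_sa F F' I mu) \<and> \<Phi> None = None \<and>
            (\<forall>S\<in>finne F' J nu. \<Phi> (Some (cls F' J nu S)) =
               Some (restrict (\<lambda>m. Min ((\<lambda>n. w n m) ` S)) (elems UNIV I mu)))) \<and>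
         (\<exists>\<Psi>. sa_iso F \<Psi> (canon_sa F' I mu) (point_sa F F' J nu) \<and> \<Psi> None = None \<and>
            (\<forall>S\<in>finne F' I mu. \<Psi> (Some (cls F' I mu S)) =
               Some (restrict (\<lambda>n. Min ((\<lambda>m. v m n) ` S)) (elems UNIV J nu))))"
proof -
  interpret d1: dualp F F' I mu J nu v w
    by (rule dualp.intro) (rule assms)+
  interpret d2: dualp F F' J nu I mu w v
    by (rule dualp.intro) (rule assms | rule sd_swap[OF assms(6)])+
  show ?thesis using d1.half d2.half by (rule conjI)
qed
end
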